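(* Let $x,y\in\mathbb{Z}_3$ be $3$-adic integers and let $v=(v_1,v_2,\dots)$ be a sequence in $\{0,1\}$ containing infinitely many $1$'s. If $v$ is a back tracing parity vector for both $x$ and $y$, then $x=y$. (In particular, this holds for positive integers $x,y$.)
   Context: On $\mathbb{Z}_3$ let $T_0^{-1}(z)=2z$, and for $z\equiv 2\pmod 3$ let $T_1^{-1}(z)=(2z-1)/3\in\mathbb{Z}_3$. A sequence $(v_1,v_2,\dots)\in\{0,1\}^{\mathbb{N}}$ is a back tracing parity vector for $x\in\mathbb{Z}_3$ if the sequence $x_0=x$, $x_i=T_{v_i}^{-1}(x_{i-1})$ ($i\ge 1$) is everywhere defined, i.e. $x_{i-1}\equiv 2\pmod 3$ whenever $v_i=1$. For a positive integer $x$ this agrees with: there are positive integers $x_0=x,x_1,x_2,\dots$ with $T(x_i)=x_{i-1}$ and $x_i\equiv v_i\pmod 2$, where $T(z)=z/2$ for $z$ even and $T(z)=(3z+1)/2$ for $z$ odd. *)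

theory Defs
  imports Main
begin

text \<open>3-adic integers, represented canonically as coherent sequences of residues:
  x n is the residue of x modulo 3^n (in 0..<3^n), and x (n+1) reduces to x n mod 3^n.\<close>
definition Z3 :: "(nat \<Rightarrow> int) set" where
  "Z3 = {f. \<forall>n. 0 \<le> f n \<and> f n < 3 ^ n \<and> f (Suc n) mod 3 ^ n = f n}"

definition cong2_mod3 :: "(nat \<Rightarrow> int) \<Rightarrow> bool" where
  "cong2_mod3 z \<longleftrightarrow> z 1 = 2"

definition Tinv0 :: "(nat \<Rightarrow> int) \<Rightarrow> (nat \<Rightarrow> int)" where
  "Tinv0 z = (\<lambda>n. (2 * z n) mod 3 ^ n)"

text \<open>T1^{-1}(z) = (2z-1)/3, meaningful for z = 2 mod 3: the residue mod 3^n is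
  ((2 z - 1) div 3) computed from the residue of z mod 3^(n+1).\<close>
definition Tinv1 :: "(nat \<Rightarrow> int) \<Rightarrow> (nat \<Rightarrow> int)" where
  "Tinv1 z = (\<lambda>n. ((2 * z (Suc n) - 1) div 3) mod 3 ^ n)"

text \<open>The back-traced sequence x_0 = x, x_i = T_{v_i}^{-1}(x_{i-1}); v indexed from 1.\<close>
fun backtrace :: "(nat \<Rightarrow> int) \<Rightarrow> (nat \<Rightarrow> nat) \<Rightarrow> nat \<Rightarrow> (nat \<Rightarrow> int)" where
  "backtrace x v 0 = x"
| "backtrace x v (Suc i) = (if v (Suc i) = 1 then Tinv1 else Tinv0) (backtrace x v i)"

definition is_btpv :: "(nat \<Rightarrow> nat) \<Rightarrow> (nat \<Rightarrow> int) \<Rightarrow> bool" where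
  "is_btpv v x \<longleftrightarrow> (\<forall>i\<ge>1. v i \<in> {0, 1}) \<and>
     (\<forall>i\<ge>1. v i = 1 \<longrightarrow> cong2_mod3 (backtrace x v (i - 1)))"

end

theory Submission
  imports Defs
begin

lemma Z3_zero: assumes "f \<in> Z3" shows "f 0 = 0"
proof -
  have "0 \<le> f 0" "f 0 < 3 ^ 0" using assms unfolding Z3_def by blast+
  then show ?thesis by simp
qed

lemma Z3_self: assumes "f \<in> Z3" shows "f n mod 3 ^ n = f n"
proof -
  have "0 \<le> f n" "f n < 3 ^ n" using assms unfolding Z3_def by blast+
  then show ?thesis by (rule mod_pos_pos_trivial)
qed

lemma Z3_mono: assumes "f \<in> Z3" shows "m \<le> n \<Longrightarrow> f n mod 3 ^ m = f m"
proof (induction n)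
  case 0 then show ?case using Z3_zero[OF assms] by simp
next
  case (Suc n)
  show ?case
  proof (cases "m = Suc n")
    case True then show ?thesis using Z3_self[OF assms, of "Suc n"] by (simp only:)
  next
    case False
    then have "m \<le> n" using Suc by simp
    have "(3::int) ^ m dvd 3 ^ n" using \<open>m \<le> n\<close> by (simp add: le_imp_power_dvd)
    then have "f (Suc n) mod 3 ^ m = (f (Suc n) mod 3 ^ n) mod 3 ^ m"
      by (simp add: mod_mod_cancel)
    also have "\<dots> = f n mod 3 ^ m" using assms by (simp add: Z3_def)
    finally show ?thesis using Suc \<open>m \<le> n\<close> by simp
  qed
qed

lemma Z3_lower: "f \<in> Z3 \<Longrightarrow> g \<in> Z3 \<Longrightarrow> f n = g n \<Longrightarrow> m \<le> n \<Longrightarrow> f m = g m"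
  by (metis Z3_mono)

lemma ex_q: fixes a :: int assumes "a mod 3 = 2" obtains q where "2 * a - 1 = 3 * q"
proof -
  have "a = 3 * (a div 3) + 2" using assms div_mult_mod_eq[of a 3] by simp
  then have "2 * a - 1 = 3 * (2 * (a div 3) + 1)" by simp
  then show ?thesis using that by blast
qed

lemma Z3_mod3: assumes "f \<in> Z3" "f 1 = 2" shows "f (Suc n) mod 3 = 2"
  using Z3_mono[OF assms(1), of 1 "Suc n"] assms(2) by simp

lemma Tinv0_Z3: assumes "z \<in> Z3" shows "Tinv0 z \<in> Z3"
proof -
  have "(2 * z (Suc n) mod 3 ^ Suc n) mod 3 ^ n = 2 * z n mod 3 ^ n" for n
  proof -
    have "(2 * z (Suc n) mod 3 ^ Suc n) mod 3 ^ n = 2 * z (Suc n) mod 3 ^ n"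
      by (simp add: mod_mod_cancel)
    also have "\<dots> = 2 * (z (Suc n) mod 3 ^ n) mod 3 ^ n" by (simp add: mod_mult_right_eq)
    also have "\<dots> = 2 * z n mod 3 ^ n" using assms by (simp add: Z3_def)
    finally show ?thesis .
  qed
  then show ?thesis unfolding Z3_def Tinv0_def by simp
qed

lemma Tinv1_Z3: assumes "z \<in> Z3" "z 1 = 2" shows "Tinv1 z \<in> Z3"
proof -
  have "(((2 * z (Suc (Suc n)) - 1) div 3) mod 3 ^ Suc n) mod 3 ^ n
        = ((2 * z (Suc n) - 1) div 3) mod 3 ^ n" for n
  proof -
    obtain t where t: "z (Suc (Suc n)) = z (Suc n) + 3 ^ Suc n * t"
      using Z3_mono[OF assms(1), of "Suc n" "Suc (Suc n)"]
      by (metis le_Suc_eq div_mult_mod_eq add.commute mult.commute)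
    obtain q where q: "2 * z (Suc n) - 1 = 3 * q"
      using Z3_mod3[OF assms, of n] ex_q by blast
    have e1: "(2 * z (Suc n) - 1) div 3 = q" using q by simp
    have "2 * z (Suc (Suc n)) - 1 = 3 * (q + 2 * 3 ^ n * t)" using t q by (simp add: algebra_simps)
    then have e2: "(2 * z (Suc (Suc n)) - 1) div 3 = q + 2 * 3 ^ n * t" by simp
    have "q + 2 * 3 ^ n * t = q + 3 ^ n * (2 * t)" by simp
    then have "(q + 2 * 3 ^ n * t) mod 3 ^ n = q mod 3 ^ n" by (metis mod_mult_self2)
    moreover have "((q + 2 * 3 ^ n * t) mod 3 ^ Suc n) mod 3 ^ n = (q + 2 * 3 ^ n * t) mod 3 ^ n"
      by (rule mod_mod_cancel) simp
    ultimately show ?thesis unfolding e1 e2 by simp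
  qed
  then show ?thesis unfolding Z3_def Tinv1_def by simp
qed

lemma Tinv0_inj: assumes "z \<in> Z3" "w \<in> Z3" "Tinv0 z n = Tinv0 w n" shows "z n = w n"
proof -
  have "2 * z n mod 3 ^ n = 2 * w n mod 3 ^ n" using assms(3) by (simp add: Tinv0_def)
  then have "(3::int) ^ n dvd 2 * (z n - w n)" by (simp add: mod_eq_dvd_iff algebra_simps)
  moreover have "coprime ((3::int) ^ n) 2" by simp
  ultimately have "(3::int) ^ n dvd z n - w n" using coprime_dvd_mult_right_iff by blast
  then have "z n mod 3 ^ n = w n mod 3 ^ n" by (simp only: mod_eq_dvd_iff)
  then show ?thesis using Z3_self[OF assms(1)] Z3_self[OF assms(2)] by metis
qed

lemma Tinv1_inj: assumes "z \<in> Z3" "w \<in> Z3" "z 1 = 2" "w 1 = 2" "Tinv1 z n = Tinv1 w n"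
  shows "z (Suc n) = w (Suc n)"
proof -
  obtain q where q: "2 * z (Suc n) - 1 = 3 * q"
    using Z3_mod3[OF assms(1,3), of n] ex_q by blast
  obtain r where r: "2 * w (Suc n) - 1 = 3 * r"
    using Z3_mod3[OF assms(2,4), of n] ex_q by blast
  have "q mod 3 ^ n = r mod 3 ^ n" using assms(5) q r by (simp add: Tinv1_def)
  then have "(3::int) ^ n dvd q - r" by (simp add: mod_eq_dvd_iff)
  then have "(3::int) * 3 ^ n dvd 3 * (q - r)" by (rule mult_dvd_mono[OF dvd_refl])
  then have "(3::int) ^ Suc n dvd 3 * (q - r)" by simp
  then have "(3::int) ^ Suc n dvd 2 * (z (Suc n) - w (Suc n))" using q r by (simp add: algebra_simps)
  moreover have "coprime ((3::int) ^ Suc n) 2" by simp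
  ultimately have "(3::int) ^ Suc n dvd z (Suc n) - w (Suc n)" using coprime_dvd_mult_right_iff by blast
  then have "z (Suc n) mod 3 ^ Suc n = w (Suc n) mod 3 ^ Suc n" by (simp only: mod_eq_dvd_iff)
  then show ?thesis using Z3_self[OF assms(1)] Z3_self[OF assms(2)] by metis
qed

lemma bt_Z3: assumes "x \<in> Z3" "is_btpv v x" shows "backtrace x v j \<in> Z3"
proof (induction j)
  case 0 then show ?case using assms by simp
next
  case (Suc j)
  show ?case
  proof (cases "v (Suc j) = 1")
    case True
    then have "cong2_mod3 (backtrace x v j)" using assms(2) unfolding is_btpv_def
      by (metis diff_Suc_1 le_add1 plus_1_eq_Suc)
    then show ?thesis using True Suc Tinv1_Z3 by (simp add: cong2_mod3_def)
  next
    case False then show ?thesis using Suc Tinv0_Z3 by simp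
  qed
qed

lemma bt_cong: assumes "is_btpv v x" "v (Suc j) = 1" shows "backtrace x v j 1 = 2"
  using assms unfolding is_btpv_def cong2_mod3_def by (metis diff_Suc_1 le_add1 plus_1_eq_Suc)

definition cnt :: "(nat \<Rightarrow> nat) \<Rightarrow> nat \<Rightarrow> nat \<Rightarrow> nat" where
  "cnt v j i = card {k. j < k \<and> k \<le> i \<and> v k = 1}"

lemma cnt_step: assumes "j < i"
  shows "cnt v j i = cnt v (Suc j) i + (if v (Suc j) = 1 then 1 else 0)"
proof -
  have fin: "finite {k. Suc j < k \<and> k \<le> i \<and> v k = 1}" by simp
  show ?thesis
  proof (cases "v (Suc j) = 1")
    case True
    have "{k. j < k \<and> k \<le> i \<and> v k = 1} = insert (Suc j) {k. Suc j < k \<and> k \<le> i \<and> v k = 1}"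
      using True assms by auto
    then show ?thesis unfolding cnt_def using True fin by simp
  next
    case False
    have "{k. j < k \<and> k \<le> i \<and> v k = 1} = {k. Suc j < k \<and> k \<le> i \<and> v k = 1}"
      using False assms apply auto by (metis Suc_lessI)
    then show ?thesis unfolding cnt_def using False by simp
  qed
qed

lemma cnt_unbounded: assumes "infinite {i. i \<ge> 1 \<and> v i = 1}" shows "\<exists>i. cnt v 0 i \<ge> n"
proof (induction n)
  case 0 then show ?case by simp
next
  case (Suc n)
  then obtain i where i: "cnt v 0 i \<ge> n" by blast
  obtain k where k: "k > i" "k \<ge> 1" "v k = 1"
    using assms by (metis (mono_tags, lifting) finite_nat_set_iff_bounded_le mem_Collect_eq not_le)
  have "insert k {m. 0 < m \<and> m \<le> i \<and> v m = 1} \<subseteq> {m. 0 < m \<and> m \<le> k \<and> v m = 1}"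
    using k by auto
  then have "card (insert k {m. 0 < m \<and> m \<le> i \<and> v m = 1}) \<le> cnt v 0 k"
    unfolding cnt_def by (intro card_mono) auto
  moreover have "card (insert k {m. 0 < m \<and> m \<le> i \<and> v m = 1}) = Suc (cnt v 0 i)"
    unfolding cnt_def using k by simp
  ultimately show ?case using i by (intro exI[of _ k]) simp
qed

theorem mainTheorem7:
  fixes x y :: "nat \<Rightarrow> int" and v :: "nat \<Rightarrow> nat"
  assumes "x \<in> Z3" and "y \<in> Z3"
    and "\<forall>i\<ge>1. v i \<in> {0, 1}"
    and "infinite {i. i \<ge> 1 \<and> v i = 1}"
    and "is_btpv v x" and "is_btpv v y"
  shows "x = y"
proof -
  have key: "backtrace x v (i - d) (cnt v (i - d) i) = backtrace y v (i - d) (cnt v (i - d) i)"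
    if "d \<le> i" for i d
    using that
  proof (induction d)
    case 0
    have "cnt v i i = 0" unfolding cnt_def by simp
    then show ?case using Z3_zero[OF bt_Z3[OF assms(1,5)]] Z3_zero[OF bt_Z3[OF assms(2,6)]] by simp
  next
    case (Suc d)
    define j where "j = i - Suc d"
    have ji: "j < i" "Suc j = i - d" using Suc.prems unfolding j_def by auto
    have IH: "backtrace x v (Suc j) (cnt v (Suc j) i) = backtrace y v (Suc j) (cnt v (Suc j) i)"
      using Suc ji by simp
    have zx: "backtrace x v j \<in> Z3" and zy: "backtrace y v j \<in> Z3"
      using bt_Z3 assms by auto
    show ?case unfolding j_def[symmetric]
    proof (cases "v (Suc j) = 1")
      case True
      then show "backtrace x v j (cnt v j i) = backtrace y v j (cnt v j i)"
        using IH cnt_step[OF ji(1), of v] Tinv1_inj[OF zx zy bt_cong[OF assms(5) True] bt_cong[OF assms(6) True]]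
        by simp
    next
      case False
      then show "backtrace x v j (cnt v j i) = backtrace y v j (cnt v j i)"
        using IH cnt_step[OF ji(1), of v] Tinv0_inj[OF zx zy] by simp
    qed
  qed
  have "x n = y n" for n
  proof -
    obtain i where i: "cnt v 0 i \<ge> n" using cnt_unbounded[OF assms(4)] by blast
    have "x (cnt v 0 i) = y (cnt v 0 i)" using key[of i i] by simp
    then show ?thesis using Z3_lower assms(1,2) i by blast
  qed
  then show ?thesis by blast
qed

end
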